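(* Let $(X,\rho)$ be a geodesic metric space. (i) If $X$ is an $\mathbb R$-tree, then for every point $o\in X$ there exists a unique partial order $\preceq$ on $X$ such that $(X,\rho,\preceq)$ is an upper-semilinear metric $\vee$-semilattice with root $o$. Moreover, in this order every nonempty subset $A\subset X$ has a supremum. (ii) Conversely, if $X$ admits a partial order $\preceq$ such that $(X,\rho,\preceq)$ is an upper-semilinear metric $\vee$-semilattice, then $X$ is an $\mathbb R$-tree.
   Context: A segment $[xy]$ in a metric space is the image of a map $\gamma:[\alpha,\beta]\to X$ with $\rho(\gamma(s),\gamma(t))=|s-t|$ for all $s,t$, $\gamma(\alpha)=x$, $\gamma(\beta)=y$. A metric space is geodesic if any two points are joined by a segment. A geodesic metric space $X$ is an $\mathbb R$-tree if any two points are joined by a unique segment and, for all $x,y,z\in X$, $[xy]\subset[xz]\cup[zy]$. For a partial order $\preceq$ on $X$, the pair $(X,\preceq)$ is a $\vee$-semilattice if any two points $x,y$ have a supremum $x\vee y$. The triple $(X,\rho,\preceq)$ is a metric $\vee$-semilattice if $(X,\preceq)$ is a $\vee$-semilattice and (1) for all $x,y,z$ with $x\preceq z\preceq y$ one has $\rho(x,z)+\rho(z,y)=\rho(x,y)$, and (2) for all $x,y$ one has $\rho(x,y)=\rho(x,x\vee y)+\rho(x\vee y,y)$. The order is upper-semilinear if for every $x$ the upper cone $U_x=\{y\in X: x\preceq y\}$ is linearly ordered. "With root $o$" means that $o$ is the greatest element of $(X,\preceq)$. *)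

theory Defs
  imports "HOL-Analysis.Analysis"
begin

text \<open>The metric space (X, rho) is the type 'a of class metric_space, with rho = dist and X = UNIV.\<close>

definition is_segment :: "'a::metric_space \<Rightarrow> 'a \<Rightarrow> 'a set \<Rightarrow> bool" where
  "is_segment x y S \<longleftrightarrow>
     (\<exists>(\<gamma>::real \<Rightarrow> 'a) \<alpha> \<beta>. \<alpha> \<le> \<beta> \<and>
        (\<forall>s\<in>{\<alpha>..\<beta>}. \<forall>t\<in>{\<alpha>..\<beta>}. dist (\<gamma> s) (\<gamma> t) = \<bar>s - t\<bar>) \<and>
        \<gamma> \<alpha> = x \<and> \<gamma> \<beta> = y \<and> S = \<gamma> ` {\<alpha>..\<beta>})"

definition geodesic_space :: "'a::metric_space itself \<Rightarrow> bool" where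
  "geodesic_space _ \<longleftrightarrow> (\<forall>x y::'a. \<exists>S. is_segment x y S)"

definition R_tree :: "'a::metric_space itself \<Rightarrow> bool" where
  "R_tree T \<longleftrightarrow> geodesic_space T \<and>
     (\<forall>x y::'a. \<exists>!S. is_segment x y S) \<and>
     (\<forall>x y z::'a. \<forall>Sxy Sxz Szy. is_segment x y Sxy \<and> is_segment x z Sxz \<and> is_segment z y Szy
        \<longrightarrow> Sxy \<subseteq> Sxz \<union> Szy)"

definition partial_order_rel :: "('a \<Rightarrow> 'a \<Rightarrow> bool) \<Rightarrow> bool" where
  "partial_order_rel le \<longleftrightarrow> (\<forall>x. le x x) \<and> (\<forall>x y. le x y \<and> le y x \<longrightarrow> x = y) \<and>
     (\<forall>x y z. le x y \<and> le y z \<longrightarrow> le x z)"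

definition is_sup :: "('a \<Rightarrow> 'a \<Rightarrow> bool) \<Rightarrow> 'a set \<Rightarrow> 'a \<Rightarrow> bool" where
  "is_sup le A s \<longleftrightarrow> (\<forall>a\<in>A. le a s) \<and> (\<forall>u. (\<forall>a\<in>A. le a u) \<longrightarrow> le s u)"

definition join_semilattice :: "('a \<Rightarrow> 'a \<Rightarrow> bool) \<Rightarrow> bool" where
  "join_semilattice le \<longleftrightarrow> partial_order_rel le \<and> (\<forall>x y. \<exists>s. is_sup le {x, y} s)"

definition join :: "('a \<Rightarrow> 'a \<Rightarrow> bool) \<Rightarrow> 'a \<Rightarrow> 'a \<Rightarrow> 'a" where
  "join le x y = (THE s. is_sup le {x, y} s)"

definition metric_join_semilattice :: "('a::metric_space \<Rightarrow> 'a \<Rightarrow> bool) \<Rightarrow> bool" where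
  "metric_join_semilattice le \<longleftrightarrow> join_semilattice le \<and>
     (\<forall>x y z. le x z \<and> le z y \<longrightarrow> dist x z + dist z y = dist x y) \<and>
     (\<forall>x y. dist x y = dist x (join le x y) + dist (join le x y) y)"

definition upper_semilinear :: "('a \<Rightarrow> 'a \<Rightarrow> bool) \<Rightarrow> bool" where
  "upper_semilinear le \<longleftrightarrow> (\<forall>x y z. le x y \<and> le x z \<longrightarrow> le y z \<or> le z y)"

definition has_root :: "('a \<Rightarrow> 'a \<Rightarrow> bool) \<Rightarrow> 'a \<Rightarrow> bool" where
  "has_root le r \<longleftrightarrow> (\<forall>x. le x r)"

end

theory Submission imports Defs begin

locale mjs =
  fixes le :: "'a::metric_space \<Rightarrow> 'a \<Rightarrow> bool"
  assumes mjs: "metric_join_semilattice le" and usl: "upper_semilinear le"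
begin

lemma po: "partial_order_rel le" using mjs unfolding metric_join_semilattice_def join_semilattice_def by blast
lemma rfl: "le x x" using po unfolding partial_order_rel_def by blast
lemma asym: "le x y \<Longrightarrow> le y x \<Longrightarrow> x = y" using po unfolding partial_order_rel_def by blast
lemma trns: "le x y \<Longrightarrow> le y z \<Longrightarrow> le x z" using po unfolding partial_order_rel_def by blast
lemma cmp: "le x y \<Longrightarrow> le x z \<Longrightarrow> le y z \<or> le z y" using usl unfolding upper_semilinear_def by blast
lemma d1: "le x z \<Longrightarrow> le z y \<Longrightarrow> dist x z + dist z y = dist x y"
  using mjs unfolding metric_join_semilattice_def by blast
lemma d2: "dist x y = dist x (join le x y) + dist (join le x y) y"
  using mjs unfolding metric_join_semilattice_def by blast

lemma jsup: "is_sup le {x, y} (join le x y)"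
proof -
  obtain s where s: "is_sup le {x,y} s" using mjs unfolding metric_join_semilattice_def join_semilattice_def by blast
  have "\<exists>!s. is_sup le {x,y} s"
  proof (intro ex1I)
    show "is_sup le {x,y} s" by (rule s)
  next
    fix t assume "is_sup le {x,y} t" then show "t = s" using s asym unfolding is_sup_def by blast
  qed
  then show ?thesis unfolding join_def by (rule theI')
qed
lemma ub1: "le x (join le x y)" using jsup unfolding is_sup_def by blast
lemma ub2: "le y (join le x y)" using jsup unfolding is_sup_def by blast
lemma lub: "le x u \<Longrightarrow> le y u \<Longrightarrow> le (join le x y) u" using jsup unfolding is_sup_def by blast
lemma jcomm: "join le x y = join le y x" unfolding join_def by (simp add: insert_commute)

lemma L2a:
  assumes b: "dist x z + dist z y = dist x y" and ab: "le (join le x z) (join le y z)"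
  shows "le x z \<and> le z (join le x y)"
proof -
  define a where "a = join le x z"
  define bb where "bb = join le y z"
  define m where "m = join le x y"
  have xa: "le x a" "le z a" using ub1 ub2 a_def by auto
  have yb: "le y bb" "le z bb" using ub1 ub2 bb_def by auto
  have xm: "le x m" "le y m" using ub1 ub2 m_def by auto
  have abb: "le a bb" using ab a_def bb_def by simp
  have mb: "le m bb" using lub trns[OF xa(1) abb] yb m_def by blast
  have da: "dist x z = dist x a + dist a z" unfolding a_def by (rule d2)
  have jb: "join le z y = bb" using jcomm bb_def by metis
  have db: "dist z y = dist z bb + dist bb y" using d2[of z y] by (simp only: jb)
  have dm: "dist x y = dist x m + dist m y" unfolding m_def by (rule d2)
  show ?thesis
  proof (cases "le a m")
    case True
    have "le bb m" using lub[of y m z] xm(2) trns[OF xa(2) True] bb_def by simp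
    then have bm: "bb = m" using asym mb by blast
    have e1: "dist z m = dist z a + dist a m" using d1[OF xa(2) True] by simp
    have e2: "dist x m = dist x a + dist a m" using d1[OF xa(1) True] by simp
    have c1: "dist z a = dist a z" by (rule dist_commute)
    have "dist a z = 0" using b da db[unfolded bm] dm e1 e2 c1 zero_le_dist[of a z] by linarith
    then have "z = a" by simp
    then show ?thesis using xa True m_def by simp
  next
    case False
    then have ma: "le m a" using cmp[OF xa(1) xm(1)] by blast
    have "le bb a" using lub[of y a z] trns[OF xm(2) ma] xa(2) bb_def by simp
    then have ba: "bb = a" using asym abb by blast
    have e1: "dist x a = dist x m + dist m a" using d1[OF xm(1) ma] by simp
    have e2: "dist y a = dist y m + dist m a" using d1[OF xm(2) ma] by simp
    have c1: "dist z a = dist a z" "dist a y = dist y a" "dist y m = dist m y" by (rule dist_commute)+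
    have "dist a z + dist m a = 0" using b da db[unfolded ba] dm e1 e2 c1 by linarith
    then have "dist a z = 0" "dist m a = 0" using zero_le_dist[of a z] zero_le_dist[of m a] by linarith+
    then have za: "z = a" and "m = a" by simp_all
    then have "le z m" using rfl by simp
    then show ?thesis using xa(1) za m_def by simp
  qed
qed

lemma L2:
  assumes b: "dist x z + dist z y = dist x y"
  shows "(le x z \<and> le z (join le x y)) \<or> (le y z \<and> le z (join le x y))"
proof -
  have "le (join le x z) (join le y z) \<or> le (join le y z) (join le x z)"
    using cmp[OF ub2 ub2] by blast
  then show ?thesis
  proof
    assume "le (join le x z) (join le y z)" then show ?thesis using L2a b by blast
  next
    assume h: "le (join le y z) (join le x z)"
    have "dist y z + dist z x = dist y x" using b by (simp add: dist_commute add.commute)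
    then have "le y z \<and> le z (join le y x)" by (rule L2a[OF _ h])
    then show ?thesis by (simp add: jcomm)
  qed
qed

lemma L2r:
  assumes "le x z" "le z (join le x y)"
  shows "dist x z + dist z y = dist x y"
proof -
  have "dist x z + dist z (join le x y) = dist x (join le x y)" using d1 assms by blast
  moreover have "dist z y \<le> dist z (join le x y) + dist (join le x y) y" by (rule dist_triangle)
  moreover have "dist x y \<le> dist x z + dist z y" by (rule dist_triangle)
  ultimately show ?thesis using d2[of x y] by linarith
qed

lemma L2iff: "dist x z + dist z y = dist x y \<longleftrightarrow>
   (le x z \<and> le z (join le x y)) \<or> (le y z \<and> le z (join le x y))"
proof
  assume "dist x z + dist z y = dist x y" then show "(le x z \<and> le z (join le x y)) \<or> (le y z \<and> le z (join le x y))" by (rule L2)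
next
  assume "(le x z \<and> le z (join le x y)) \<or> (le y z \<and> le z (join le x y))"
  then show "dist x z + dist z y = dist x y"
  proof
    assume "le x z \<and> le z (join le x y)" then show ?thesis using L2r by blast
  next
    assume "le y z \<and> le z (join le x y)"
    then have "dist y z + dist z x = dist y x" using L2r[of y z x] jcomm by simp
    then show ?thesis by (simp add: dist_commute add.commute)
  qed
qed


lemma L3b: "le x p \<Longrightarrow> le x q \<Longrightarrow> dist x p = dist x q \<Longrightarrow> p = q"
proof -
  assume a: "le x p" "le x q" "dist x p = dist x q"
  from cmp[OF a(1,2)] show "p = q"
  proof
    assume "le p q" then have "dist x p + dist p q = dist x q" using d1 a by blast
    then have "dist p q = 0" using a by linarith
    then show ?thesis by simp
  next
    assume "le q p" then have "dist x q + dist q p = dist x p" using d1 a by blast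
    then have "dist q p = 0" using a by linarith
    then show ?thesis by simp
  qed
qed

lemma L3a:
  assumes "le x p" "le p (join le x y)" "le y q" "le q (join le x y)"
    "dist x q + dist q y = dist x y" "dist x p = dist x q"
  shows "p = q"
proof -
  let ?m = "join le x y"
  have "dist x p + dist p ?m = dist x ?m" using d1 assms by blast
  moreover have "dist y q + dist q ?m = dist y ?m" using d1 assms by blast
  moreover have "dist x y = dist x ?m + dist ?m y" by (rule d2)
  moreover have "dist ?m y = dist y ?m" by (rule dist_commute)
  moreover have "dist q y = dist y q" by (rule dist_commute)
  ultimately have "dist p ?m + dist q ?m = 0" using assms(5,6) by linarith
  then have "dist p ?m = 0" "dist q ?m = 0" using zero_le_dist[of p ?m] zero_le_dist[of q ?m] by linarith+
  then have "p = ?m" "q = ?m" by simp_all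
  then show ?thesis by simp
qed

lemma L3:
  fixes x y p q :: 'a
  assumes p: "dist x p + dist p y = dist x y" and q: "dist x q + dist q y = dist x y"
    and e: "dist x p = dist x q"
  shows "p = q"
proof -
  have e2: "dist y p = dist y q" using p q e by (simp add: dist_commute)
  have p': "dist y p + dist p x = dist y x" and q': "dist y q + dist q x = dist y x"
    using p q by (simp_all add: dist_commute add.commute)
  from L2[OF p] show ?thesis
  proof
    assume P: "le x p \<and> le p (join le x y)"
    from L2[OF q] show ?thesis
    proof
      assume "le x q \<and> le q (join le x y)" then show ?thesis using L3b[of x p q] P e by blast
    next
      assume "le y q \<and> le q (join le x y)" then show ?thesis using L3a[OF _ _ _ _ q e] P by blast
    qed
  next
    assume P: "le y p \<and> le p (join le x y)"
    from L2[OF q] show ?thesis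
    proof
      assume "le x q \<and> le q (join le x y)" then show ?thesis using L3a[OF _ _ _ _ p e[symmetric]] P by (metis)
    next
      assume "le y q \<and> le q (join le x y)" then show ?thesis using L3b[of y p q] P e2 by blast
    qed
  qed
qed

end

lemma seg_bet:
  assumes "is_segment x y S" "p \<in> S"
  shows "dist x p + dist p y = dist x y"
proof -
  obtain g a b where h: "a \<le> b" "\<forall>s\<in>{a..b}. \<forall>t\<in>{a..b}. dist (g s) (g t) = \<bar>s - t\<bar>"
    "g a = x" "g b = y" "S = g ` {a..b}" using assms(1) unfolding is_segment_def by blast
  obtain t where t: "t \<in> {a..b}" "p = g t" using h assms(2) by blast
  have "dist (g a) (g t) = \<bar>a - t\<bar>" by (rule h(2)[rule_format]) (use h(1) t in auto)
  moreover have "dist (g t) (g b) = \<bar>t - b\<bar>" by (rule h(2)[rule_format]) (use h(1) t in auto)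
  moreover have "dist (g a) (g b) = \<bar>a - b\<bar>" by (rule h(2)[rule_format]) (use h(1) t in auto)
  ultimately have "dist x p = t - a" "dist p y = b - t" "dist x y = b - a" using h t by auto
  then show ?thesis by simp
qed


lemma iso_cont:
  fixes g :: "real \<Rightarrow> 'a::metric_space"
  assumes "\<forall>s\<in>{a..b}. \<forall>t\<in>{a..b}. dist (g s) (g t) = \<bar>s - t\<bar>"
  shows "continuous_on {a..b} g"
  unfolding continuous_on_iff
proof (intro ballI allI impI)
  fix x e assume x: "x \<in> {a..b}" and e: "(0::real) < e"
  show "\<exists>d>0. \<forall>x'\<in>{a..b}. dist x' x < d \<longrightarrow> dist (g x') (g x) < e"
  proof (intro exI[of _ e] conjI ballI impI)
    fix x' assume "x' \<in> {a..b}" "dist x' x < e"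
    then show "dist (g x') (g x) < e" using assms x by (simp add: dist_real_def)
  qed (rule e)
qed

lemma concat:
  fixes x p y :: "'a::metric_space"
  assumes S1: "is_segment x p S1" and S2: "is_segment p y S2"
    and b: "dist x p + dist p y = dist x y"
  shows "\<exists>S. is_segment x y S \<and> p \<in> S"
proof -
  obtain g1 a1 b1 where h1: "a1 \<le> b1" "\<forall>s\<in>{a1..b1}. \<forall>t\<in>{a1..b1}. dist (g1 s) (g1 t) = \<bar>s - t\<bar>"
    "g1 a1 = x" "g1 b1 = p" using S1 unfolding is_segment_def by blast
  obtain g2 a2 b2 where h2: "a2 \<le> b2" "\<forall>s\<in>{a2..b2}. \<forall>t\<in>{a2..b2}. dist (g2 s) (g2 t) = \<bar>s - t\<bar>"
    "g2 a2 = p" "g2 b2 = y" using S2 unfolding is_segment_def by blast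
  define A where "A = dist x p"
  define B where "B = dist p y"
  have "dist (g1 a1) (g1 b1) = \<bar>a1 - b1\<bar>" by (rule h1(2)[rule_format]) (use h1(1) in auto)
  then have A: "b1 - a1 = A" using h1(1,3,4) A_def by simp
  have "dist (g2 a2) (g2 b2) = \<bar>a2 - b2\<bar>" by (rule h2(2)[rule_format]) (use h2(1) in auto)
  then have B: "b2 - a2 = B" using h2(1,3,4) B_def by simp
  have A0: "A \<ge> 0" "B \<ge> 0" using A_def B_def by auto
  define g where "g t = (if t \<le> A then g1 (a1 + t) else g2 (a2 + (t - A)))" for t
  have i1: "dist (g1 (a1 + s)) (g1 (a1 + t)) = \<bar>s - t\<bar>" if "s \<in> {0..A}" "t \<in> {0..A}" for s t
  proof -
    have "a1 + s \<in> {a1..b1}" "a1 + t \<in> {a1..b1}" using that A by auto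
    then have "dist (g1 (a1 + s)) (g1 (a1 + t)) = \<bar>(a1 + s) - (a1 + t)\<bar>" using h1(2) by blast
    then show ?thesis by simp
  qed
  have i2: "dist (g2 (a2 + (s - A))) (g2 (a2 + (t - A))) = \<bar>s - t\<bar>" if "s \<in> {A..A+B}" "t \<in> {A..A+B}" for s t
  proof -
    have "a2 + (s - A) \<in> {a2..b2}" "a2 + (t - A) \<in> {a2..b2}" using that B by auto
    then have "dist (g2 (a2 + (s - A))) (g2 (a2 + (t - A))) = \<bar>(a2 + (s - A)) - (a2 + (t - A))\<bar>" using h2(2) by blast
    then show ?thesis by simp
  qed
  have key: "dist (g1 (a1 + s)) (g2 (a2 + (t - A))) = t - s" if s: "s \<in> {0..A}" and t: "t \<in> {A..A+B}" for s t
  proof -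
    let ?u = "g1 (a1 + s)" and ?v = "g2 (a2 + (t - A))"
    have du: "dist x ?u = s" using i1[of 0 s] s A0 h1(3) by simp
    have "a1 + A = b1" using A by simp
    then have dup: "dist ?u p = A - s" using i1[of s A] s A0 h1(4) by simp
    have "a2 + B = b2" using B by simp
    then have dv: "dist ?v y = A + B - t" using i2[of t "A+B"] t A0 h2(4) by simp
    have dpv: "dist p ?v = t - A" using i2[of A t] t A0 h2(3) by simp
    have "dist x y \<le> dist x ?u + dist ?u y" by (rule dist_triangle)
    moreover have "dist ?u y \<le> dist ?u ?v + dist ?v y" by (rule dist_triangle)
    ultimately have "dist x y \<le> dist x ?u + dist ?u ?v + dist ?v y" by linarith
    moreover have "dist ?u ?v \<le> dist ?u p + dist p ?v" by (rule dist_triangle)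
    ultimately show ?thesis using du dup dv dpv b A_def B_def by linarith
  qed
  have iso: "\<forall>s\<in>{0..A+B}. \<forall>t\<in>{0..A+B}. dist (g s) (g t) = \<bar>s - t\<bar>"
  proof (intro ballI)
    fix s t assume s: "s \<in> {0..A+B}" and t: "t \<in> {0..A+B}"
    show "dist (g s) (g t) = \<bar>s - t\<bar>"
    proof (cases "s \<le> A")
      case True
      show ?thesis
      proof (cases "t \<le> A")
        case True2: True
        then show ?thesis using True s t i1[of s t] unfolding g_def by simp
      next
        case False
        then show ?thesis using True s t key[of s t] unfolding g_def by simp
      qed
    next
      case False
      show ?thesis
      proof (cases "t \<le> A")
        case True
        then show ?thesis using False s t key[of t s] unfolding g_def by (simp add: dist_commute)
      next
        case False2: False
        then show ?thesis using False s t i2[of s t] unfolding g_def by simp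
      qed
    qed
  qed
  have g0: "g 0 = x" using A0 h1(3) unfolding g_def by simp
  have gAB: "g (A + B) = y"
  proof (cases "B = 0")
    case True
    then have "p = y" using B_def by simp
    moreover have "a1 + A = b1" using A by simp
    ultimately show ?thesis using True h1(4) unfolding g_def by simp
  next
    case False
    moreover have "a2 + B = b2" using B by simp
    ultimately show ?thesis using A0 h2(4) unfolding g_def by simp
  qed
  have "a1 + A = b1" using A by simp
  then have gA: "g A = p" using h1(4) unfolding g_def by simp
  have AB: "0 \<le> A+B" using A0 by simp
  have "is_segment x y (g ` {0..A+B})"
    unfolding is_segment_def
    apply (rule exI[of _ g], rule exI[of _ 0], rule exI[of _ "A+B"])
    using iso g0 gAB AB by simp
  moreover have "p \<in> g ` {0..A+B}" using gA A0 by (intro image_eqI[of _ _ A]) auto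
  ultimately show ?thesis by blast
qed


context mjs
begin

lemma seg_eq:
  fixes x y :: 'a
  assumes S: "is_segment x y S"
  shows "S = {p. dist x p + dist p y = dist x y}"
proof
  show "S \<subseteq> {p. dist x p + dist p y = dist x y}" using seg_bet[OF S] by blast
next
  show "{p. dist x p + dist p y = dist x y} \<subseteq> S"
  proof
    fix p assume "p \<in> {p. dist x p + dist p y = dist x y}"
    then have p: "dist x p + dist p y = dist x y" by simp
    obtain g a b where h: "a \<le> b" "\<forall>s\<in>{a..b}. \<forall>t\<in>{a..b}. dist (g s) (g t) = \<bar>s - t\<bar>"
      "g a = x" "g b = y" "S = g ` {a..b}" using S unfolding is_segment_def by blast
    have "dist (g a) (g b) = \<bar>a - b\<bar>" by (rule h(2)[rule_format]) (use h(1) in auto)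
    then have dxy: "dist x y = b - a" using h by simp
    define t where "t = a + dist x p"
    have z: "0 \<le> dist p y" "0 \<le> dist x p" by simp_all
    have "a \<le> t" "t \<le> b" using p dxy z unfolding t_def by linarith+
    then have t: "t \<in> {a..b}" by simp
    have "dist (g a) (g t) = \<bar>a - t\<bar>" by (rule h(2)[rule_format]) (use h(1) t in auto)
    then have e: "dist x p = dist x (g t)" using h(3) unfolding t_def by simp
    have gS: "g t \<in> S" using h(5) t by simp
    have "dist x (g t) + dist (g t) y = dist x y" by (rule seg_bet[OF S gS])
    then have "p = g t" using L3[OF p _ e] by simp
    then show "p \<in> S" using gS by simp
  qed
qed

lemma trip1:
  fixes x y z p :: 'a
  assumes xp: "le x p" and pm: "le p (join le x y)"
  shows "dist x p + dist p z = dist x z \<or> dist z p + dist p y = dist z y"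
proof -
  let ?a = "join le x z" and ?b = "join le z y" and ?m = "join le x y"
  have xa: "le x ?a" "le z ?a" using ub1 ub2 by auto
  have zb: "le z ?b" "le y ?b" using ub1 ub2 by auto
  have xm: "le x ?m" "le y ?m" using ub1 ub2 by auto
  have A: "dist x p + dist p z = dist x z" if "le p ?a" using L2iff[of x p z] that xp by blast
  have B: "dist z p + dist p y = dist z y" if "le z p" "le p ?b" using L2iff[of z p y] that by blast
  from cmp[OF xp xa(1)] show ?thesis
  proof
    assume "le p ?a" then show ?thesis using A by blast
  next
    assume ap: "le ?a p"
    then have zp: "le z p" using trns xa(2) by blast
    from cmp[OF zp zb(1)] show ?thesis
    proof
      assume "le p ?b" then show ?thesis using B zp by blast
    next
      assume bp: "le ?b p"
      then have "le y p" using trns zb(2) by blast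
      then have "le ?m p" using lub xp by blast
      then have pm': "p = ?m" using asym pm by blast
      from cmp[OF xa(2) zb(1)] show ?thesis
      proof
        assume ab: "le ?a ?b"
        then have "le x ?b" using trns xa(1) by blast
        then have "le ?m ?b" using lub zb(2) by blast
        then show ?thesis using B zp pm' by simp
      next
        assume ba: "le ?b ?a"
        then have "le y ?a" using trns zb(2) by blast
        then have "le ?m ?a" using lub xa(1) by blast
        then show ?thesis using A pm' by simp
      qed
    qed
  qed
qed

lemma trip:
  fixes x y z p :: 'a
  assumes "dist x p + dist p y = dist x y"
  shows "dist x p + dist p z = dist x z \<or> dist z p + dist p y = dist z y"
proof -
  from L2[OF assms] show ?thesis
  proof
    assume "le x p \<and> le p (join le x y)" then show ?thesis using trip1 by blast
  next
    assume "le y p \<and> le p (join le x y)"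
    then have "le y p" "le p (join le y x)" using jcomm by auto
    then have "dist y p + dist p z = dist y z \<or> dist z p + dist p x = dist z x" by (rule trip1)
    then show ?thesis by (metis dist_commute add.commute)
  qed
qed

lemma rtree:
  assumes g: "geodesic_space TYPE('a)"
  shows "R_tree TYPE('a)"
  unfolding R_tree_def
proof (intro conjI allI impI)
  show "geodesic_space TYPE('a)" by (rule g)
next
  fix x y :: 'a
  obtain S where S: "is_segment x y S" using g unfolding geodesic_space_def by blast
  show "\<exists>!S. is_segment x y S"
  proof (rule ex1I[of _ S])
    show "is_segment x y S" by (rule S)
  next
    fix S' assume "is_segment x y S'" then show "S' = S" using seg_eq S by blast
  qed
next
  fix x y z :: 'a and Sxy Sxz Szy
  assume h: "is_segment x y Sxy \<and> is_segment x z Sxz \<and> is_segment z y Szy"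
  then have e: "Sxy = {p. dist x p + dist p y = dist x y}" "Sxz = {p. dist x p + dist p z = dist x z}"
    "Szy = {p. dist z p + dist p y = dist z y}" using seg_eq by blast+
  show "Sxy \<subseteq> Sxz \<union> Szy" unfolding e using trip by blast
qed

lemma root_char:
  assumes r: "has_root le r"
  shows "le x y \<longleftrightarrow> dist x y + dist y r = dist x r"
proof -
  have xr: "le x r" "le y r" using r unfolding has_root_def by auto
  have jr: "join le x r = r" using asym[OF lub[OF xr(1) rfl] ub2] .
  show ?thesis
  proof
    assume "le x y" then show "dist x y + dist y r = dist x r" using d1 xr by blast
  next
    assume "dist x y + dist y r = dist x r"
    then have "(le x y \<and> le y r) \<or> (le r y \<and> le y r)" using L2[of x y r] jr by simp
    then show "le x y" using asym xr by blast
  qed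
qed

end


definition ple :: "'a::metric_space \<Rightarrow> 'a \<Rightarrow> 'a \<Rightarrow> bool" where
  "ple r x y \<longleftrightarrow> dist x y + dist y r = dist x r"

lemma rt_geo:
  assumes "R_tree TYPE('a::metric_space)" shows "\<exists>S. is_segment (x::'a) y S"
proof -
  have "geodesic_space TYPE('a)" using assms unfolding R_tree_def by (rule conjunct1)
  then show ?thesis unfolding geodesic_space_def by blast
qed

lemma rt_uniq:
  assumes "R_tree TYPE('a::metric_space)" shows "\<exists>!S. is_segment (x::'a) y S"
proof -
  have "\<forall>x y::'a. \<exists>!S. is_segment x y S" using assms unfolding R_tree_def by (rule conjunct2[THEN conjunct1])
  then show ?thesis by blast
qed

lemma rt_tri:
  assumes "R_tree TYPE('a::metric_space)" "is_segment (x::'a) y A" "is_segment x z B" "is_segment z y C"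
  shows "A \<subseteq> B \<union> C"
proof -
  have "\<forall>x y z::'a. \<forall>Sxy Sxz Szy. is_segment x y Sxy \<and> is_segment x z Sxz \<and> is_segment z y Szy
        \<longrightarrow> Sxy \<subseteq> Sxz \<union> Szy" using assms(1) unfolding R_tree_def by (rule conjunct2[THEN conjunct2])
  then show ?thesis using assms(2-4) by blast
qed

lemma rt_seg_eq:
  fixes x y :: "'a::metric_space"
  assumes rt: "R_tree TYPE('a)" and S: "is_segment x y S"
  shows "S = {p. dist x p + dist p y = dist x y}"
proof
  show "S \<subseteq> {p. dist x p + dist p y = dist x y}" using seg_bet[OF S] by blast
next
  show "{p. dist x p + dist p y = dist x y} \<subseteq> S"
  proof
    fix p assume "p \<in> {p. dist x p + dist p y = dist x y}"
    then have p: "dist x p + dist p y = dist x y" by simp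
    obtain S1 where S1: "is_segment x p S1" using rt_geo[OF rt] by blast
    obtain S2 where S2: "is_segment p y S2" using rt_geo[OF rt] by blast
    obtain S' where S': "is_segment x y S'" "p \<in> S'" using concat[OF S1 S2 p] by blast
    have "\<exists>!S. is_segment x y S" using rt_uniq[OF rt] .
    then have "S' = S" using S S'(1) by blast
    then show "p \<in> S" using S'(2) by simp
  qed
qed

lemma rt_trip:
  fixes x y z p :: "'a::metric_space"
  assumes rt: "R_tree TYPE('a)" and p: "dist x p + dist p y = dist x y"
  shows "dist x p + dist p z = dist x z \<or> dist z p + dist p y = dist z y"
proof -
  obtain S1 where S1: "is_segment x y S1" using rt_geo[OF rt] by blast
  obtain S2 where S2: "is_segment x z S2" using rt_geo[OF rt] by blast
  obtain S3 where S3: "is_segment z y S3" using rt_geo[OF rt] by blast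
  have "S1 \<subseteq> S2 \<union> S3" using rt_tri[OF rt S1 S2 S3] .
  then show ?thesis using rt_seg_eq[OF rt S1] rt_seg_eq[OF rt S2] rt_seg_eq[OF rt S3] p by blast
qed

lemma rt_param:
  fixes x r :: "'a::metric_space"
  assumes rt: "R_tree TYPE('a)"
  obtains g a b where "a \<le> b" "\<forall>s\<in>{a..b}. \<forall>t\<in>{a..b}. dist (g s) (g t) = \<bar>s - t\<bar>"
      "g a = x" "g b = r" "{p. ple r x p} = g ` {a..b}"
proof -
  obtain S where S: "is_segment x r S" using rt_geo[OF rt] by blast
  obtain g a b where h: "a \<le> b" "\<forall>s\<in>{a..b}. \<forall>t\<in>{a..b}. dist (g s) (g t) = \<bar>s - t\<bar>"
      "g a = x" "g b = r" "S = g ` {a..b}" using S unfolding is_segment_def by blast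
  have "{p. ple r x p} = S" using rt_seg_eq[OF rt S] unfolding ple_def by simp
  then show ?thesis using that h by simp
qed

lemma ple_refl: "ple r x x" unfolding ple_def by simp
lemma ple_antisym: "ple r x y \<Longrightarrow> ple r y x \<Longrightarrow> x = y"
proof -
  assume a: "ple r x y" "ple r y x"
  have "dist y x = dist x y" by (rule dist_commute)
  then have "dist x y = 0" using a zero_le_dist[of x y] unfolding ple_def by linarith
  then show "x = y" by simp
qed
lemma ple_trans: "ple r x y \<Longrightarrow> ple r y z \<Longrightarrow> ple r x z"
proof -
  assume a: "ple r x y" "ple r y z"
  have "dist x z \<le> dist x y + dist y z" by (rule dist_triangle)
  moreover have "dist x r \<le> dist x z + dist z r" by (rule dist_triangle)
  ultimately show ?thesis using a unfolding ple_def by linarith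
qed
lemma ple_d1: "ple r x z \<Longrightarrow> ple r z y \<Longrightarrow> ple r x y \<Longrightarrow> dist x z + dist z y = dist x y"
  unfolding ple_def by linarith
lemma ple_po: "partial_order_rel (ple r)"
  unfolding partial_order_rel_def using ple_refl ple_antisym ple_trans by blast

lemma mono_seg:
  assumes iso: "\<forall>s\<in>{a..b}. \<forall>t\<in>{a..b}. dist (g s) (g t) = \<bar>s - t\<bar>" and gb: "g b = r"
    and s: "s \<in> {a..b}" and t: "t \<in> {a..b}" and st: "s \<le> t"
  shows "ple r (g s) (g t)"
proof -
  have b: "b \<in> {a..b}" using s by simp
  have "dist (g s) (g t) = \<bar>s - t\<bar>" using iso s t by blast
  moreover have "dist (g t) (g b) = \<bar>t - b\<bar>" using iso t b by blast
  moreover have "dist (g s) (g b) = \<bar>s - b\<bar>" using iso s b by blast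
  moreover have "\<bar>s - t\<bar> = t - s" "\<bar>t - b\<bar> = b - t" "\<bar>s - b\<bar> = b - s" using s t st by auto
  ultimately show ?thesis unfolding ple_def gb[symmetric] by linarith
qed


lemma closed_ple_set: "closed {p::'a::metric_space. ple r c p}"
  unfolding ple_def by (rule closed_Collect_eq) (intro continuous_intros)+

lemma closed_bet_set: "closed {p::'a::metric_space. dist x p + dist p y = dist x y}"
  by (rule closed_Collect_eq) (intro continuous_intros)+

lemma rt_sup:
  fixes r :: "'a::metric_space"
  assumes rt: "R_tree TYPE('a)" and A: "A \<noteq> {}"
  shows "\<exists>s. is_sup (ple r) A s"
proof -
  obtain a0 where a0: "a0 \<in> A" using A by blast
  obtain g a b where h: "a \<le> b" "\<forall>s\<in>{a..b}. \<forall>t\<in>{a..b}. dist (g s) (g t) = \<bar>s - t\<bar>"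
      "g a = a0" "g b = r" "{p. ple r a0 p} = g ` {a..b}" by (rule rt_param[OF rt, of a0 r])
  define U where "U = (\<Inter>c\<in>A. {p. ple r c p})"
  have cU: "closed U" unfolding U_def by (rule closed_INT) (simp add: closed_ple_set)
  define T where "T = {a..b} \<inter> g -` U"
  have cT: "closed T" unfolding T_def by (rule continuous_closed_preimage[OF iso_cont[OF h(2)] closed_atLeastAtMost cU])
  have rU: "r \<in> U" unfolding U_def ple_def by simp
  have bT: "b \<in> T" unfolding T_def using h(1,4) rU by simp
  have bdd: "bdd_below T" unfolding T_def by (rule bdd_belowI[of _ a]) simp
  define t0 where "t0 = Inf T"
  have t0T: "t0 \<in> T" unfolding t0_def using closed_contains_Inf[OF _ bdd cT] bT by blast
  show ?thesis
  proof (intro exI[of _ "g t0"])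
    show "is_sup (ple r) A (g t0)" unfolding is_sup_def
    proof (intro conjI allI impI ballI)
      fix c assume "c \<in> A" then show "ple r c (g t0)" using t0T unfolding T_def U_def by blast
    next
      fix u assume u: "\<forall>c\<in>A. ple r c u"
      then have "u \<in> {p. ple r a0 p}" using a0 by blast
      then obtain t where t: "t \<in> {a..b}" "u = g t" using h(5) by blast
      have "u \<in> U" using u unfolding U_def by blast
      then have "t \<in> T" unfolding T_def using t by simp
      then have "t0 \<le> t" unfolding t0_def using bdd by (rule cInf_lower)
      moreover have "t0 \<in> {a..b}" using t0T unfolding T_def by simp
      ultimately show "ple r (g t0) u" using mono_seg[OF h(2) h(4)] t by blast
    qed
  qed
qed

lemma rt_d2:
  fixes r x y c :: "'a::metric_space"
  assumes rt: "R_tree TYPE('a)" and c: "is_sup (ple r) {x, y} c"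
  shows "dist x y = dist x c + dist c y"
proof -
  obtain g a b where h: "a \<le> b" "\<forall>s\<in>{a..b}. \<forall>t\<in>{a..b}. dist (g s) (g t) = \<bar>s - t\<bar>"
      "g a = x" "g b = r" "{p. ple r x p} = g ` {a..b}" by (rule rt_param[OF rt, of x r])
  have xc: "ple r x c" "ple r y c" using c unfolding is_sup_def by auto
  obtain t0 where t0: "t0 \<in> {a..b}" "c = g t0" using h(5) xc(1) by blast
  have least: "ple r c u" if "ple r x u" "ple r y u" for u using c that unfolding is_sup_def by blast
  define P where "P = {a..b} \<inter> g -` {p. dist x p + dist p y = dist x y}"
  have cP: "closed P" unfolding P_def
    by (rule continuous_closed_preimage[OF iso_cont[OF h(2)] closed_atLeastAtMost closed_bet_set])
  show ?thesis
  proof (cases "t0 = a")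
    case True
    then show ?thesis using t0 h(3) by simp
  next
    case False
    then have at0: "a < t0" using t0 by simp
    have sub: "{a..<t0} \<subseteq> P"
    proof
      fix t assume t: "t \<in> {a..<t0}"
      then have tab: "t \<in> {a..b}" using t0 by simp
      have xt: "ple r x (g t)" using h(5) tab by blast
      have "ple r (g t) (g t0)" using mono_seg[OF h(2) h(4) tab t0(1)] t by simp
      have "\<not> ple r y (g t)"
      proof
        assume "ple r y (g t)"
        then have "ple r (g t0) (g t)" using least xt t0(2) by blast
        then have "g t = g t0" using ple_antisym \<open>ple r (g t) (g t0)\<close> by blast
        moreover have "dist (g t) (g t0) = \<bar>t - t0\<bar>" using h(2) tab t0(1) by blast
        ultimately show False using t by simp
      qed
      moreover have "dist x (g t) + dist (g t) r = dist x r" using xt unfolding ple_def .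
      ultimately have "dist x (g t) + dist (g t) y = dist x y"
        using rt_trip[OF rt, of x "g t" r y] unfolding ple_def by blast
      then show "t \<in> P" unfolding P_def using tab by simp
    qed
    have "closure {a..<t0} \<subseteq> P" using closure_minimal[OF sub cP] .
    then have "{a..t0} \<subseteq> P" using at0 by simp
    moreover have "t0 \<in> {a..t0}" using at0 by simp
    ultimately have "t0 \<in> P" by blast
    then show ?thesis unfolding P_def using t0 by simp
  qed
qed

lemma rt_usl:
  fixes r :: "'a::metric_space"
  assumes rt: "R_tree TYPE('a)"
  shows "upper_semilinear (ple r)"
  unfolding upper_semilinear_def
proof (intro allI impI)
  fix x y z :: 'a assume a: "ple r x y \<and> ple r x z"
  obtain g a b where h: "a \<le> b" "\<forall>s\<in>{a..b}. \<forall>t\<in>{a..b}. dist (g s) (g t) = \<bar>s - t\<bar>"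
      "g a = x" "g b = r" "{p. ple r x p} = g ` {a..b}" by (rule rt_param[OF rt, of x r])
  obtain s where s: "s \<in> {a..b}" "y = g s" using h(5) a by blast
  obtain t where t: "t \<in> {a..b}" "z = g t" using h(5) a by blast
  show "ple r y z \<or> ple r z y"
  proof (cases "s \<le> t")
    case True then show ?thesis using mono_seg[OF h(2) h(4) s(1) t(1)] s t by simp
  next
    case False then show ?thesis using mono_seg[OF h(2) h(4) t(1) s(1)] s t by simp
  qed
qed

lemma ple_join:
  fixes r :: "'a::metric_space"
  assumes rt: "R_tree TYPE('a)"
  shows "is_sup (ple r) {x, y} (join (ple r) x y)"
proof -
  obtain s where s: "is_sup (ple r) {x,y} s" using rt_sup[OF rt, of "{x,y}"] by blast
  have "\<exists>!s. is_sup (ple r) {x,y} s"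
  proof (intro ex1I)
    show "is_sup (ple r) {x,y} s" by (rule s)
  next
    fix t assume "is_sup (ple r) {x,y} t" then show "t = s" using s ple_antisym unfolding is_sup_def by blast
  qed
  then show ?thesis unfolding join_def by (rule theI')
qed

lemma ple_mjs:
  fixes r :: "'a::metric_space"
  assumes rt: "R_tree TYPE('a)"
  shows "metric_join_semilattice (ple r) \<and> upper_semilinear (ple r) \<and> has_root (ple r) r"
  unfolding metric_join_semilattice_def join_semilattice_def
proof (intro conjI allI impI)
  show "partial_order_rel (ple r)" by (rule ple_po)
next
  fix x y :: 'a show "\<exists>s. is_sup (ple r) {x, y} s" using ple_join[OF rt] by blast
next
  fix x y z :: 'a assume "ple r x z \<and> ple r z y"
  then show "dist x z + dist z y = dist x y" using ple_d1 ple_trans by blast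
next
  fix x y :: 'a show "dist x y = dist x (join (ple r) x y) + dist (join (ple r) x y) y"
    by (rule rt_d2[OF rt ple_join[OF rt]])
next
  show "upper_semilinear (ple r)" by (rule rt_usl[OF rt])
next
  show "has_root (ple r) r" unfolding has_root_def ple_def by simp
qed


lemma uniq_le:
  fixes r :: "'a::metric_space"
  assumes "metric_join_semilattice le \<and> upper_semilinear le \<and> has_root le r"
  shows "le = ple r"
proof -
  interpret mjs le using assms by (unfold_locales) auto
  have r: "has_root le r" using assms by blast
  show ?thesis
  proof (intro ext)
    fix x y show "le x y = ple r x y" unfolding ple_def by (rule root_char[OF r])
  qed
qed

theorem theorem1:
  assumes "geodesic_space TYPE('a::metric_space)"
  shows "(R_tree TYPE('a) \<longrightarrow>
           (\<forall>r::'a.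
              (\<exists>!le. metric_join_semilattice le \<and> upper_semilinear le \<and> has_root le r) \<and>
              (\<forall>le. metric_join_semilattice le \<and> upper_semilinear le \<and> has_root le r \<longrightarrow>
                 (\<forall>A::'a set. A \<noteq> {} \<longrightarrow> (\<exists>s. is_sup le A s)))))
       \<and> (\<forall>le::'a \<Rightarrow> 'a \<Rightarrow> bool. metric_join_semilattice le \<and> upper_semilinear le \<longrightarrow> R_tree TYPE('a))"
proof (intro conjI impI allI)
  fix r :: 'a
  assume rt: "R_tree TYPE('a)"
  show "\<exists>!le. metric_join_semilattice le \<and> upper_semilinear le \<and> has_root le r"
  proof (rule ex1I[of _ "ple r"])
    show "metric_join_semilattice (ple r) \<and> upper_semilinear (ple r) \<and> has_root (ple r) r"
      by (rule ple_mjs[OF rt])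
  next
    fix le :: "'a \<Rightarrow> 'a \<Rightarrow> bool"
    assume "metric_join_semilattice le \<and> upper_semilinear le \<and> has_root le r"
    then show "le = ple r" by (rule uniq_le)
  qed
next
  fix r :: 'a and le :: "'a \<Rightarrow> 'a \<Rightarrow> bool" and A :: "'a set"
  assume rt: "R_tree TYPE('a)"
    and h: "metric_join_semilattice le \<and> upper_semilinear le \<and> has_root le r" and A: "A \<noteq> {}"
  have "le = ple r" using h by (rule uniq_le)
  then show "\<exists>s. is_sup le A s" using rt_sup[OF rt A] by simp
next
  fix le :: "'a \<Rightarrow> 'a \<Rightarrow> bool"
  assume h: "metric_join_semilattice le \<and> upper_semilinear le"
  interpret mjs le using h by (unfold_locales) auto
  show "R_tree TYPE('a)" by (rule rtree[OF assms])
qed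

end
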